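(* With the notation of the context, for every $v\in V$, $$\kappa_A(v)+\kappa_B(\phi(v))\ \le\ L-1+\frac2N.$$
   Context: Let $A,B$ be groups, $L\ge1$, $a_1,\dots,a_L\in A\setminus\{1\}$, $b_1,\dots,b_L\in B\setminus\{1\}$. Let $N\in\{2,3,\dots\}\cup\{\infty\}$ be the minimum of the orders of $a_1,\dots,a_L,b_1,\dots,b_L$ (convention $1/\infty=0$). Let $W$ be the real vector space with basis the formal symbols $(i,j)$, $1\le i,j\le L$. Let $V=\{\sum_{i,j}x_{ij}(i,j): x_{ij}\ge0,\ \sum_i x_{ij}=1 \text{ for all } j,\ \sum_j x_{ij}=1\text{ for all } i\}$. A disk vector in $A$ is an element of $W$ of the form $\sum_{j=1}^k (i_j,i_{j+1})$ with $k\ge1$, indices $i_1,\dots,i_k\in\{1,\dots,L\}$, $i_{k+1}=i_1$, and $a_{i_1}a_{i_2}\cdots a_{i_k}=1$ in $A$; let $\mathcal D_A$ be the set of disk vectors in $A$, and define $\mathcal D_B$ analogously using the $b_i$. For $v\in V$ set $\kappa_A(v)=\sup\{\sum_s t_s : v=\sum_s t_s d_s+\sum_{i,j}x'_{ij}(i,j),\ t_s\ge0,\ d_s\in\mathcal D_A,\ x'_{ij}\ge 0\}$ (finite sums), and define $\kappa_B$ analogously with $\mathcal D_B$. Let $\phi:V\to V$ be the map $\phi(\sum_{i,j}x_{ij}(i,j))=\sum_{i,j}x_{ij}(j-1,i)$, where $j-1$ is read as $L$ when $j=1$. *)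

theory Defs
  imports "HOL-Algebra.Multiplicative_Group" "HOL-Library.Extended_Nat" Complex_Main
begin

definition elem_order :: "('a, 'c) monoid_scheme \<Rightarrow> 'a \<Rightarrow> enat" where
  "elem_order G x = (if group.ord G x = 0 then \<infinity> else enat (group.ord G x))"

definition recip_enat :: "enat \<Rightarrow> real" where
  "recip_enat N = (case N of enat n \<Rightarrow> 1 / real n | \<infinity> \<Rightarrow> 0)"

definition min_order ::
  "('a, 'c) monoid_scheme \<Rightarrow> ('b, 'd) monoid_scheme \<Rightarrow> nat \<Rightarrow> (nat \<Rightarrow> 'a) \<Rightarrow> (nat \<Rightarrow> 'b) \<Rightarrow> enat" where
  "min_order A B L a b =
     Min ((\<lambda>i. elem_order A (a i)) ` {1..L} \<union> (\<lambda>i. elem_order B (b i)) ` {1..L})"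

text \<open>Elements of W are represented as functions on index pairs; only pairs in {1..L}^2 matter.\<close>
definition in_V :: "nat \<Rightarrow> (nat \<times> nat \<Rightarrow> real) \<Rightarrow> bool" where
  "in_V L v \<longleftrightarrow>
     (\<forall>i\<in>{1..L}. \<forall>j\<in>{1..L}. v (i, j) \<ge> 0) \<and>
     (\<forall>j\<in>{1..L}. (\<Sum>i=1..L. v (i, j)) = 1) \<and>
     (\<forall>i\<in>{1..L}. (\<Sum>j=1..L. v (i, j)) = 1)"

definition cyc_vec :: "nat list \<Rightarrow> nat \<times> nat \<Rightarrow> real" where
  "cyc_vec is p = real (card {m. m < length is \<and>
       (is ! m, is ! ((m + 1) mod length is)) = p})"

definition disk_word :: "('a, 'c) monoid_scheme \<Rightarrow> nat \<Rightarrow> (nat \<Rightarrow> 'a) \<Rightarrow> nat list \<Rightarrow> bool" where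
  "disk_word G L a is \<longleftrightarrow> is \<noteq> [] \<and> set is \<subseteq> {1..L} \<and>
     foldr (\<lambda>i y. a i \<otimes>\<^bsub>G\<^esub> y) is \<one>\<^bsub>G\<^esub> = \<one>\<^bsub>G\<^esub>"

definition disk_vectors :: "('a, 'c) monoid_scheme \<Rightarrow> nat \<Rightarrow> (nat \<Rightarrow> 'a) \<Rightarrow> (nat \<times> nat \<Rightarrow> real) set" where
  "disk_vectors G L a = cyc_vec ` {is. disk_word G L a is}"

text \<open>kappa: sup of sum t_s over finite families with v = sum t_s d_s + (nonnegative remainder).
  A finite family is a list of pairs (t_s, d_s).\<close>
definition kappa :: "('a, 'c) monoid_scheme \<Rightarrow> nat \<Rightarrow> (nat \<Rightarrow> 'a) \<Rightarrow> (nat \<times> nat \<Rightarrow> real) \<Rightarrow> real" where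
  "kappa G L a v = Sup {sum_list (map fst ts) | ts.
      (\<forall>(t, d)\<in>set ts. t \<ge> 0 \<and> d \<in> disk_vectors G L a) \<and>
      (\<forall>i\<in>{1..L}. \<forall>j\<in>{1..L}.
          \<exists>x'. x' \<ge> 0 \<and> v (i, j) = sum_list (map (\<lambda>(t, d). t * d (i, j)) ts) + x')}"

text \<open>phi(sum x_ij (i,j)) = sum x_ij (j-1, i), with j-1 read as L when j = 1;
  i.e. the coefficient of (p,q) in phi v is the coefficient of (q, p+1) in v (p+1 read as 1 when p = L).\<close>
definition phi :: "nat \<Rightarrow> (nat \<times> nat \<Rightarrow> real) \<Rightarrow> (nat \<times> nat \<Rightarrow> real)" where
  "phi L v = (\<lambda>(p, q). v (q, if p = L then 1 else p + 1))"

end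

theory Submission
  imports Defs
begin

definition lin :: "nat \<Rightarrow> (nat \<times> nat \<Rightarrow> real) \<Rightarrow> (nat \<times> nat \<Rightarrow> real) \<Rightarrow> real" where
  "lin L w f = (\<Sum>i=1..L. \<Sum>j=1..L. w (i, j) * f (i, j))"

lemma lin_add: "lin L w (\<lambda>p. f p + g p) = lin L w f + lin L w g"
  unfolding lin_def by (simp add: distrib_left sum.distrib)

lemma lin_scale: "lin L w (\<lambda>p. c * f p) = c * lin L w f"
  unfolding lin_def by (simp add: sum_distrib_left mult.left_commute)

lemma lin_zero: "lin L w (\<lambda>p. 0) = 0"
  unfolding lin_def by simp

lemma lin_mono:
  assumes "\<And>i j. i \<in> {1..L} \<Longrightarrow> j \<in> {1..L} \<Longrightarrow> w (i, j) \<ge> 0"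
    and "\<And>i j. i \<in> {1..L} \<Longrightarrow> j \<in> {1..L} \<Longrightarrow> f (i, j) \<le> g (i, j)"
  shows "lin L w f \<le> lin L w g"
  unfolding lin_def
  by (intro sum_mono mult_left_mono) (auto intro: assms)

lemma lin_sumlist:
  assumes "\<forall>(t, d)\<in>set ts. t \<ge> 0 \<and> 1 \<le> lin L w d"
  shows "sum_list (map fst ts) \<le> lin L w (\<lambda>p. sum_list (map (\<lambda>(t, d). t * d p) ts))"
  using assms
proof (induction ts)
  case Nil
  then show ?case by (simp add: lin_zero)
next
  case (Cons x ts)
  obtain t d where x: "x = (t, d)" by fastforce
  have h: "t \<ge> 0" "1 \<le> lin L w d" using Cons.prems x by auto
  have "lin L w (\<lambda>p. sum_list (map (\<lambda>(t, d). t * d p) (x # ts)))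
      = t * lin L w d + lin L w (\<lambda>p. sum_list (map (\<lambda>(t, d). t * d p) ts))"
    using x by (simp add: lin_add lin_scale)
  moreover have "t \<le> t * lin L w d" using h by (metis mult_left_mono mult.right_neutral)
  ultimately show ?case using Cons x by auto
qed

lemma kappa_le:
  assumes wnn: "\<And>i j. i \<in> {1..L} \<Longrightarrow> j \<in> {1..L} \<Longrightarrow> w (i, j) \<ge> 0"
    and vnn: "\<And>i j. i \<in> {1..L} \<Longrightarrow> j \<in> {1..L} \<Longrightarrow> v (i, j) \<ge> 0"
    and disk: "\<And>d. d \<in> disk_vectors G L a \<Longrightarrow> 1 \<le> lin L w d"
  shows "kappa G L a v \<le> lin L w v"
  unfolding kappa_def
proof (rule cSup_least)
  show "{sum_list (map fst ts) |ts.
      (\<forall>(t, d)\<in>set ts. t \<ge> 0 \<and> d \<in> disk_vectors G L a) \<and>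
      (\<forall>i\<in>{1..L}. \<forall>j\<in>{1..L}.
          \<exists>x'. x' \<ge> 0 \<and> v (i, j) = sum_list (map (\<lambda>(t, d). t * d (i, j)) ts) + x')} \<noteq> {}"
    using vnn by (auto intro!: exI[of _ "[]"])
next
  fix x assume "x \<in> {sum_list (map fst ts) |ts.
      (\<forall>(t, d)\<in>set ts. t \<ge> 0 \<and> d \<in> disk_vectors G L a) \<and>
      (\<forall>i\<in>{1..L}. \<forall>j\<in>{1..L}.
          \<exists>x'. x' \<ge> 0 \<and> v (i, j) = sum_list (map (\<lambda>(t, d). t * d (i, j)) ts) + x')}"
  then obtain ts where x: "x = sum_list (map fst ts)"
    and h1: "\<forall>(t, d)\<in>set ts. t \<ge> 0 \<and> d \<in> disk_vectors G L a"
    and h2: "\<forall>i\<in>{1..L}. \<forall>j\<in>{1..L}.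
          \<exists>x'. x' \<ge> 0 \<and> v (i, j) = sum_list (map (\<lambda>(t, d). t * d (i, j)) ts) + x'"
    by blast
  have "\<forall>(t, d)\<in>set ts. t \<ge> 0 \<and> 1 \<le> lin L w d" using h1 disk by auto
  then have "x \<le> lin L w (\<lambda>p. sum_list (map (\<lambda>(t, d). t * d p) ts))"
    using x lin_sumlist by blast
  also have "\<dots> \<le> lin L w v"
  proof (rule lin_mono)
    fix i j assume "i \<in> {1..L}" "j \<in> {1..L}"
    then show "sum_list (map (\<lambda>(t, d). t * d (i, j)) ts) \<le> v (i, j)"
      using h2 by fastforce
  qed (rule wnn)
  finally show "x \<le> lin L w v" .
qed

lemma cyc_vec_lin:
  assumes "set is \<subseteq> {1..L}"
  shows "lin L w (cyc_vec is) = (\<Sum>m<length is. w (is ! m, is ! ((m + 1) mod length is)))"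
proof (cases "is = []")
  case True
  then show ?thesis by (simp add: lin_def cyc_vec_def)
next
  case False
  define k where "k = length is"
  define e where "e m = (is ! m, is ! ((m + 1) mod k))" for m
  have kpos: "k > 0" using False k_def by simp
  have img: "e ` {..<k} \<subseteq> {1..L} \<times> {1..L}"
  proof
    fix p assume "p \<in> e ` {..<k}"
    then obtain m where m: "m < k" "p = e m" by auto
    have "(m + 1) mod k < k" using kpos by simp
    then show "p \<in> {1..L} \<times> {1..L}"
      using m assms unfolding e_def k_def by (auto dest!: nth_mem)
  qed
  have "(\<Sum>m<k. w (e m)) = (\<Sum>p\<in>e ` {..<k}. \<Sum>m\<in>{m \<in> {..<k}. e m = p}. w (e m))"
    by (rule sum.image_gen) simp
  also have "\<dots> = (\<Sum>p\<in>e ` {..<k}. w p * real (card {m. m < k \<and> e m = p}))"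
  proof (rule sum.cong)
    fix p assume "p \<in> e ` {..<k}"
    have "(\<Sum>m\<in>{m \<in> {..<k}. e m = p}. w (e m)) = (\<Sum>m\<in>{m \<in> {..<k}. e m = p}. w p)"
      by (rule sum.cong) auto
    also have "\<dots> = w p * real (card {m. m < k \<and> e m = p})"
      by (simp add: mult.commute conj_commute)
    finally show "(\<Sum>m\<in>{m \<in> {..<k}. e m = p}. w (e m)) = w p * real (card {m. m < k \<and> e m = p})" .
  qed simp
  also have "\<dots> = (\<Sum>p\<in>{1..L} \<times> {1..L}. w p * real (card {m. m < k \<and> e m = p}))"
  proof (rule sum.mono_neutral_left)
    show "\<forall>p\<in>{1..L} \<times> {1..L} - e ` {..<k}. w p * real (card {m. m < k \<and> e m = p}) = 0"
    proof
      fix p assume "p \<in> {1..L} \<times> {1..L} - e ` {..<k}"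
      then have "{m. m < k \<and> e m = p} = {}" by blast
      then show "w p * real (card {m. m < k \<and> e m = p}) = 0" by simp
    qed
  qed (use img in auto)
  also have "\<dots> = lin L w (cyc_vec is)"
    unfolding lin_def cyc_vec_def e_def k_def
    by (simp add: sum.cartesian_product split_beta prod_eq_iff)
  finally show ?thesis unfolding e_def k_def by simp
qed

lemma cyclic_const:
  fixes f :: "nat \<Rightarrow> int"
  assumes "k > 0" and mono: "\<And>m. m < k \<Longrightarrow> f ((m + 1) mod k) \<le> f m"
  shows "\<And>m. m < k \<Longrightarrow> f m = f 0"
proof -
  have up: "f m \<le> f 0" if "m < k" for m
    using that
  proof (induction m)
    case 0 then show ?case by simp
  next
    case (Suc m)
    then have "f (Suc m) = f ((m + 1) mod k)" by simp
    also have "\<dots> \<le> f m" using mono[of m] Suc.prems by simp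
    finally show ?case using Suc by simp
  qed
  have down: "f (k - 1) \<le> f m" if "m \<le> k - 1" for m
    using that
  proof (induction m rule: inc_induct)
    case base then show ?case by simp
  next
    case (step n)
    then have "n < k" by simp
    have "f (Suc n) = f ((n + 1) mod k)" using step by simp
    also have "\<dots> \<le> f n" using mono \<open>n < k\<close> by simp
    finally show ?case using step by simp
  qed
  have "f 0 = f ((k - 1 + 1) mod k)" using assms by simp
  also have "\<dots> \<le> f (k - 1)" using mono[of "k - 1"] assms by simp
  finally have "f 0 \<le> f (k - 1)" .
  then show "\<And>m. m < k \<Longrightarrow> f m = f 0"
    using up down by (metis Suc_pred' assms(1) less_Suc_eq_le order_antisym order_trans)
qed

lemma ascent_exists:
  fixes f :: "nat \<Rightarrow> int"
  assumes "k > 0" and "\<exists>m<k. f m \<noteq> f 0"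
  shows "\<exists>m<k. f m < f ((m + 1) mod k)"
  using cyclic_const[of k f] assms by (meson not_le)

lemma foldr_replicate:
  assumes "group G" "a x \<in> carrier G"
  shows "foldr (\<lambda>i y. a i \<otimes>\<^bsub>G\<^esub> y) (replicate k x) \<one>\<^bsub>G\<^esub> = a x [^]\<^bsub>G\<^esub> k"
proof (induction k)
  case 0
  then show ?case by simp
next
  case (Suc k)
  interpret group G by fact
  have "foldr (\<lambda>i y. a i \<otimes>\<^bsub>G\<^esub> y) (replicate (Suc k) x) \<one>\<^bsub>G\<^esub>
      = a x \<otimes>\<^bsub>G\<^esub> foldr (\<lambda>i y. a i \<otimes>\<^bsub>G\<^esub> y) (replicate k x) \<one>\<^bsub>G\<^esub>"
    by (simp only: replicate_Suc foldr_Cons o_def)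
  also have "\<dots> = a x \<otimes>\<^bsub>G\<^esub> a x [^]\<^bsub>G\<^esub> k" using Suc.IH by simp
  also have "\<dots> = a x [^]\<^bsub>G\<^esub> Suc k" using nat_pow_Suc2[OF assms(2), of k] by simp
  finally show ?case .
qed

lemma disk_cases:
  assumes "group G" and car: "\<And>i. i \<in> {1..L} \<Longrightarrow> a i \<in> carrier G"
    and dw: "disk_word G L a is"
  shows "(\<exists>x\<in>{1..L}. is = replicate (length is) x \<and> a x [^]\<^bsub>G\<^esub> (length is) = \<one>\<^bsub>G\<^esub>) \<or>
    ((\<exists>m<length is. is ! m < is ! ((m + 1) mod length is)) \<and>
     (\<exists>m<length is. is ! m > is ! ((m + 1) mod length is)))"
proof -
  define k where "k = length is"
  have ne: "is \<noteq> []" and sub: "set is \<subseteq> {1..L}"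
    and prod: "foldr (\<lambda>i y. a i \<otimes>\<^bsub>G\<^esub> y) is \<one>\<^bsub>G\<^esub> = \<one>\<^bsub>G\<^esub>"
    using dw unfolding disk_word_def by auto
  have kpos: "k > 0" using ne k_def by simp
  show ?thesis
  proof (cases "\<forall>m<k. is ! m = is ! 0")
    case True
    have rep: "is = replicate k (is ! 0)"
      by (rule nth_equalityI) (use True k_def in auto)
    have x: "is ! 0 \<in> {1..L}" using sub kpos k_def nth_mem by blast
    have "a (is ! 0) [^]\<^bsub>G\<^esub> k = \<one>\<^bsub>G\<^esub>"
      using prod rep foldr_replicate[of G a "is ! 0" k] assms(1) car[OF x] by simp
    then show ?thesis using rep x k_def by blast
  next
    case False
    then have ex: "\<exists>m<k. is ! m \<noteq> is ! 0" by auto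
    have "\<exists>m<k. int (is ! m) < int (is ! ((m + 1) mod k))"
      by (rule ascent_exists[OF kpos]) (use ex in auto)
    moreover have "\<exists>m<k. - int (is ! m) < - int (is ! ((m + 1) mod k))"
      by (rule ascent_exists[OF kpos, of "\<lambda>m. - int (is ! m)"]) (use ex in auto)
    ultimately show ?thesis unfolding k_def by auto
  qed
qed

lemma loop_weight:
  assumes "group G" "x \<in> carrier G" "x [^]\<^bsub>G\<^esub> k = \<one>\<^bsub>G\<^esub>" "k \<ge> 1"
    "M \<le> elem_order G x" "M \<noteq> enat 0"
  shows "1 \<le> real k * recip_enat M"
proof -
  interpret group G by fact
  have dv: "ord x dvd k" using assms(2,3) pow_eq_id by blast
  then have o0: "ord x \<noteq> 0" using assms(4) by auto
  have ok: "ord x \<le> k" using dv assms(4) by (simp add: dvd_imp_le)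
  have "elem_order G x = enat (ord x)" using o0 unfolding elem_order_def by simp
  then obtain m where m: "M = enat m" "m \<le> ord x" using assms(5)
    by (cases M) auto
  have "m > 0" using m assms(6) by (cases m) auto
  then have "recip_enat M = 1 / real m" using m unfolding recip_enat_def by simp
  moreover have "real m \<le> real k" using m ok by simp
  ultimately have "real k * recip_enat M = real k / real m" by simp
  moreover have "real k / real m \<ge> 1" using \<open>real m \<le> real k\<close> \<open>m > 0\<close> by simp
  ultimately show ?thesis by simp
qed

lemma disk_w1:
  assumes "group G" and car: "\<And>i. i \<in> {1..L} \<Longrightarrow> a i \<in> carrier G"
    and d: "d \<in> disk_vectors G L a" and r0: "0 \<le> r"
    and loop: "\<And>x k. x \<in> {1..L} \<Longrightarrow> k \<ge> 1 \<Longrightarrow> a x [^]\<^bsub>G\<^esub> k = \<one>\<^bsub>G\<^esub> \<Longrightarrow> 1 \<le> real k * r"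
  shows "1 \<le> lin L (\<lambda>(i, j). if i < j then 1 else if i = j then r else 0) d"
proof -
  obtain ws where dis: "d = cyc_vec ws" and dw: "disk_word G L a ws"
    using d unfolding disk_vectors_def by auto
  define k where "k = length ws"
  have sub: "set ws \<subseteq> {1..L}" and ne: "ws \<noteq> []" using dw unfolding disk_word_def by auto
  define w :: "nat \<times> nat \<Rightarrow> real" where "w = (\<lambda>(i, j). if i < j then 1 else if i = j then r else 0)"
  have wnn: "w p \<ge> 0" for p using r0 unfolding w_def by (auto split: prod.splits)
  have lin: "lin L w d = (\<Sum>m<k. w (ws ! m, ws ! ((m + 1) mod k)))"
    using cyc_vec_lin[OF sub] dis k_def by simp
  from disk_cases[OF assms(1) car dw]
  show ?thesis
  proof
    assume "\<exists>x\<in>{1..L}. ws = replicate (length ws) x \<and> a x [^]\<^bsub>G\<^esub> (length ws) = \<one>\<^bsub>G\<^esub>"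
    then obtain x where x: "x \<in> {1..L}" "ws = replicate k x" "a x [^]\<^bsub>G\<^esub> k = \<one>\<^bsub>G\<^esub>"
      using k_def by auto
    have kpos: "k \<ge> 1" using ne k_def by (cases "ws") auto
    have "(\<Sum>m<k. w (ws ! m, ws ! ((m + 1) mod k))) = (\<Sum>m<k. r)"
    proof (rule sum.cong)
      fix m assume "m \<in> {..<k}"
      then have "(m + 1) mod k < k" by auto
      then show "w (ws ! m, ws ! ((m + 1) mod k)) = r"
        using x \<open>m \<in> {..<k}\<close> unfolding w_def by simp
    qed simp
    then have "lin L w d = real k * r" using lin by simp
    then show ?thesis using loop[OF x(1) kpos x(3)] unfolding w_def by simp
  next
    assume "(\<exists>m<length ws. ws ! m < ws ! ((m + 1) mod length ws)) \<and>
     (\<exists>m<length ws. ws ! m > ws ! ((m + 1) mod length ws))"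
    then obtain m where m: "m < k" "ws ! m < ws ! ((m + 1) mod k)" using k_def by auto
    have "1 = w (ws ! m, ws ! ((m + 1) mod k))" using m unfolding w_def by simp
    also have "\<dots> \<le> (\<Sum>m<k. w (ws ! m, ws ! ((m + 1) mod k)))"
      by (rule member_le_sum) (use m wnn in auto)
    finally show ?thesis using lin unfolding w_def by simp
  qed
qed

lemma disk_w2:
  assumes "group G" and car: "\<And>i. i \<in> {1..L} \<Longrightarrow> a i \<in> carrier G"
    and d: "d \<in> disk_vectors G L a" and r0: "0 \<le> r"
    and loop: "\<And>x k. x \<in> {1..L} \<Longrightarrow> k \<ge> 1 \<Longrightarrow> a x [^]\<^bsub>G\<^esub> k = \<one>\<^bsub>G\<^esub> \<Longrightarrow> 1 \<le> real k * r"
  shows "1 \<le> lin L (\<lambda>(i, j). if i = j then r else 1 / 2) d"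
proof -
  obtain ws where dis: "d = cyc_vec ws" and dw: "disk_word G L a ws"
    using d unfolding disk_vectors_def by auto
  define k where "k = length ws"
  have sub: "set ws \<subseteq> {1..L}" and ne: "ws \<noteq> []" using dw unfolding disk_word_def by auto
  define w :: "nat \<times> nat \<Rightarrow> real" where "w = (\<lambda>(i, j). if i = j then r else 1 / 2)"
  have wnn: "w p \<ge> 0" for p using r0 unfolding w_def by (auto split: prod.splits)
  have lin: "lin L w d = (\<Sum>m<k. w (ws ! m, ws ! ((m + 1) mod k)))"
    using cyc_vec_lin[OF sub] dis k_def by simp
  from disk_cases[OF assms(1) car dw]
  show ?thesis
  proof
    assume "\<exists>x\<in>{1..L}. ws = replicate (length ws) x \<and> a x [^]\<^bsub>G\<^esub> (length ws) = \<one>\<^bsub>G\<^esub>"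
    then obtain x where x: "x \<in> {1..L}" "ws = replicate k x" "a x [^]\<^bsub>G\<^esub> k = \<one>\<^bsub>G\<^esub>"
      using k_def by auto
    have kpos: "k \<ge> 1" using ne k_def by (cases "ws") auto
    have "(\<Sum>m<k. w (ws ! m, ws ! ((m + 1) mod k))) = (\<Sum>m<k. r)"
    proof (rule sum.cong)
      fix m assume "m \<in> {..<k}"
      then have "(m + 1) mod k < k" by auto
      then show "w (ws ! m, ws ! ((m + 1) mod k)) = r"
        using x \<open>m \<in> {..<k}\<close> unfolding w_def by simp
    qed simp
    then have "lin L w d = real k * r" using lin by simp
    then show ?thesis using loop[OF x(1) kpos x(3)] unfolding w_def by simp
  next
    assume "(\<exists>m<length ws. ws ! m < ws ! ((m + 1) mod length ws)) \<and>
     (\<exists>m<length ws. ws ! m > ws ! ((m + 1) mod length ws))"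
    then obtain m1 m2 where m: "m1 < k" "ws ! m1 < ws ! ((m1 + 1) mod k)"
      "m2 < k" "ws ! m2 > ws ! ((m2 + 1) mod k)" using k_def by auto
    then have ne12: "m1 \<noteq> m2" by auto
    have "1 = (\<Sum>m\<in>{m1, m2}. w (ws ! m, ws ! ((m + 1) mod k)))"
      using m ne12 unfolding w_def by simp
    also have "\<dots> \<le> (\<Sum>m<k. w (ws ! m, ws ! ((m + 1) mod k)))"
      by (rule sum_mono2) (use m wnn in auto)
    finally show ?thesis using lin unfolding w_def by simp
  qed
qed

lemma elem_order_ge2:
  assumes "group G" "x \<in> carrier G" "x \<noteq> \<one>\<^bsub>G\<^esub>"
  shows "elem_order G x = \<infinity> \<or> (\<exists>m\<ge>2. elem_order G x = enat m)"
proof -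
  interpret group G by fact
  have o1: "ord x \<noteq> 1" using ord_eq_1[OF assms(2)] assms(3) by simp
  show ?thesis
  proof (cases "ord x = 0")
    case True
    then show ?thesis unfolding elem_order_def by simp
  next
    case False
    then have "ord x \<ge> 2" using o1 by linarith
    moreover have "elem_order G x = enat (ord x)" using False unfolding elem_order_def by simp
    ultimately show ?thesis by blast
  qed
qed

lemma min_order_props:
  assumes "group A" and "group B" and "L \<ge> 1"
    and ca: "\<And>i. i \<in> {1..L} \<Longrightarrow> a i \<in> carrier A - {\<one>\<^bsub>A\<^esub>}"
    and cb: "\<And>i. i \<in> {1..L} \<Longrightarrow> b i \<in> carrier B - {\<one>\<^bsub>B\<^esub>}"
  shows "\<And>i. i \<in> {1..L} \<Longrightarrow> min_order A B L a b \<le> elem_order A (a i)"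
    and "\<And>i. i \<in> {1..L} \<Longrightarrow> min_order A B L a b \<le> elem_order B (b i)"
    and "min_order A B L a b = \<infinity> \<or> (\<exists>m\<ge>2. min_order A B L a b = enat m)"
proof -
  define S where "S = (\<lambda>i. elem_order A (a i)) ` {1..L} \<union> (\<lambda>i. elem_order B (b i)) ` {1..L}"
  have fin: "finite S" unfolding S_def by simp
  have ne: "S \<noteq> {}" unfolding S_def using assms(3) by auto
  have M: "min_order A B L a b = Min S" unfolding S_def min_order_def by simp
  have memA: "elem_order A (a i) \<in> S" if "i \<in> {1..L}" for i
    unfolding S_def using that by blast
  have memB: "elem_order B (b i) \<in> S" if "i \<in> {1..L}" for i
    unfolding S_def using that by blast
  show "min_order A B L a b \<le> elem_order A (a i)" if "i \<in> {1..L}" for i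
    using Min_le[OF fin memA[OF that]] M by simp
  show "min_order A B L a b \<le> elem_order B (b i)" if "i \<in> {1..L}" for i
    using Min_le[OF fin memB[OF that]] M by simp
  have all: "y = \<infinity> \<or> (\<exists>m\<ge>2. y = enat m)" if y: "y \<in> S" for y
  proof -
    have "(\<exists>i\<in>{1..L}. y = elem_order A (a i)) \<or> (\<exists>i\<in>{1..L}. y = elem_order B (b i))"
      using y unfolding S_def by (simp only: Un_iff image_iff)
    then show ?thesis
    proof
      assume "\<exists>i\<in>{1..L}. y = elem_order A (a i)"
      then obtain i where i: "i \<in> {1..L}" "y = elem_order A (a i)" by blast
      have "a i \<in> carrier A" "a i \<noteq> \<one>\<^bsub>A\<^esub>" using ca[OF i(1)] by auto
      from elem_order_ge2[OF assms(1) this] show ?thesis using i(2) by simp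
    next
      assume "\<exists>i\<in>{1..L}. y = elem_order B (b i)"
      then obtain i where i: "i \<in> {1..L}" "y = elem_order B (b i)" by blast
      have "b i \<in> carrier B" "b i \<noteq> \<one>\<^bsub>B\<^esub>" using cb[OF i(1)] by auto
      from elem_order_ge2[OF assms(2) this] show ?thesis using i(2) by simp
    qed
  qed
  show "min_order A B L a b = \<infinity> \<or> (\<exists>m\<ge>2. min_order A B L a b = enat m)"
    unfolding M by (rule all[OF Min_in[OF fin ne]])
qed

lemma lin_w2_rows:
  assumes "\<And>i. i \<in> {1..L} \<Longrightarrow> (\<Sum>j=1..L. f (i, j)) = 1"
  shows "lin L (\<lambda>(i, j). if i = j then r else 1 / 2) f = real L / 2 + (r - 1 / 2) * (\<Sum>i=1..L. f (i, i))"
proof -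
  have "lin L (\<lambda>(i, j). if i = j then r else 1 / 2) f
      = (\<Sum>i=1..L. \<Sum>j=1..L. f (i, j) / 2 + (r - 1 / 2) * (if i = j then f (i, j) else 0))"
    unfolding lin_def by (intro sum.cong refl) (auto simp: algebra_simps)
  also have "\<dots> = (\<Sum>i=1..L. 1 / 2 + (r - 1 / 2) * f (i, i))"
  proof (rule sum.cong[OF refl])
    fix i assume i: "i \<in> {1..L}"
    have "(\<Sum>j=1..L. f (i, j) / 2 + (r - 1 / 2) * (if i = j then f (i, j) else 0))
        = (\<Sum>j=1..L. f (i, j)) / 2 + (r - 1 / 2) * (\<Sum>j=1..L. (if i = j then f (i, j) else 0))"
      by (simp only: sum.distrib sum_divide_distrib sum_distrib_left)
    also have "(\<Sum>j=1..L. (if i = j then f (i, j) else 0)) = f (i, i)"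
      using i by (simp add: sum.delta sum.delta')
    also have "(\<Sum>j=1..L. f (i, j)) = 1" using assms[OF i] .
    finally show "(\<Sum>j=1..L. f (i, j) / 2 + (r - 1 / 2) * (if i = j then f (i, j) else 0))
        = 1 / 2 + (r - 1 / 2) * f (i, i)" .
  qed
  also have "\<dots> = real L / 2 + (r - 1 / 2) * (\<Sum>i=1..L. f (i, i))"
    by (simp add: sum.distrib sum_distrib_left)
  finally show ?thesis .
qed

lemma lin_w1:
  "lin L (\<lambda>(i, j). if i < j then 1 else if i = j then r else 0) f
     = (\<Sum>i=1..L. \<Sum>j=1..L. if i < j then f (i, j) else 0) + r * (\<Sum>i=1..L. f (i, i))"
proof -
  have "lin L (\<lambda>(i, j). if i < j then 1 else if i = j then r else 0) f
      = (\<Sum>i=1..L. \<Sum>j=1..L. (if i < j then f (i, j) else 0) + r * (if i = j then f (i, j) else 0))"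
    unfolding lin_def by (intro sum.cong refl) auto
  also have "\<dots> = (\<Sum>i=1..L. (\<Sum>j=1..L. if i < j then f (i, j) else 0) + r * f (i, i))"
    by (intro sum.cong refl) (simp add: sum.distrib sum_distrib_left[symmetric] sum.delta)
  also have "\<dots> = (\<Sum>i=1..L. \<Sum>j=1..L. if i < j then f (i, j) else 0) + r * (\<Sum>i=1..L. f (i, i))"
    by (simp add: sum.distrib sum_distrib_left)
  finally show ?thesis .
qed

lemma key_identity:
  assumes "L \<ge> 1" and cols: "\<And>j. j \<in> {1..L} \<Longrightarrow> (\<Sum>i=1..L. v (i, j)) = 1"
  shows "(\<Sum>i=1..L. \<Sum>j=1..L. if i < j then v (i, j) else 0)
       + (\<Sum>p=1..L. \<Sum>q=1..L. if p < q then phi L v (p, q) else 0) = real L - 1"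
proof -
  have phi_eq: "(\<Sum>p=1..L. \<Sum>q=1..L. if p < q then phi L v (p, q) else 0)
      = (\<Sum>q=1..L. \<Sum>p=1..L. if p < q then v (q, Suc p) else 0)"
    by (subst sum.swap) (intro sum.cong refl, auto simp: phi_def)
  have row: "(\<Sum>j=1..L. if i < j then v (i, j) else 0) + (\<Sum>p=1..L. if p < i then v (i, Suc p) else 0)
      = (\<Sum>j=2..L. v (i, j))" if i: "i \<in> {1..L}" for i
  proof -
    define h where "h j = (if j \<le> i then v (i, j) else 0)" for j
    have "(\<Sum>p=1..L. if p < i then v (i, Suc p) else 0) = (\<Sum>p=1..L. h (Suc p))"
      unfolding h_def by (intro sum.cong refl) auto
    also have "\<dots> = (\<Sum>j=Suc 1..Suc L. h j)" by (rule sum.shift_bounds_cl_Suc_ivl[symmetric])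
    also have "\<dots> = (\<Sum>j=2..L. h j) + h (Suc L)" using assms(1) by (simp add: sum.cl_ivl_Suc numeral_2_eq_2)
    also have "h (Suc L) = 0" using i unfolding h_def by simp
    finally have B: "(\<Sum>p=1..L. if p < i then v (i, Suc p) else 0) = (\<Sum>j=2..L. h j)" by simp
    have A: "(\<Sum>j=1..L. if i < j then v (i, j) else 0) = (\<Sum>j=2..L. if i < j then v (i, j) else 0)"
      using assms(1) i by (subst sum.atLeast_Suc_atMost) (auto simp: numeral_2_eq_2)
    show ?thesis unfolding A B h_def sum.distrib[symmetric]
      by (intro sum.cong refl) auto
  qed
  have "(\<Sum>i=1..L. \<Sum>j=1..L. if i < j then v (i, j) else 0)
       + (\<Sum>p=1..L. \<Sum>q=1..L. if p < q then phi L v (p, q) else 0)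
      = (\<Sum>i=1..L. (\<Sum>j=1..L. if i < j then v (i, j) else 0) + (\<Sum>p=1..L. if p < i then v (i, Suc p) else 0))"
    unfolding phi_eq by (rule sum.distrib[symmetric])
  also have "\<dots> = (\<Sum>i=1..L. \<Sum>j=2..L. v (i, j))"
    by (rule sum.cong[OF refl], rule row, assumption)
  also have "\<dots> = (\<Sum>j=2..L. \<Sum>i=1..L. v (i, j))" by (rule sum.swap)
  also have "\<dots> = (\<Sum>j=2..L. 1)" using cols by (intro sum.cong refl) auto
  also have "\<dots> = real L - 1" using assms(1) by simp
  finally show ?thesis .
qed

theorem mainTheorem6:
  fixes A :: "('a, 'c) monoid_scheme" and B :: "('b, 'd) monoid_scheme"
    and L :: nat and a :: "nat \<Rightarrow> 'a" and b :: "nat \<Rightarrow> 'b"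
    and v :: "nat \<times> nat \<Rightarrow> real"
  assumes "group A" and "group B" and "L \<ge> 1"
    and "\<And>i. i \<in> {1..L} \<Longrightarrow> a i \<in> carrier A - {\<one>\<^bsub>A\<^esub>}"
    and "\<And>i. i \<in> {1..L} \<Longrightarrow> b i \<in> carrier B - {\<one>\<^bsub>B\<^esub>}"
    and "in_V L v"
  shows "kappa A L a v + kappa B L b (phi L v)
           \<le> real L - 1 + 2 * recip_enat (min_order A B L a b)"
proof -
  define M where "M = min_order A B L a b"
  define r where "r = recip_enat M"
  define P where "P = phi L v"
  have mp1: "M \<le> elem_order A (a i)" if "i \<in> {1..L}" for i
    unfolding M_def by (rule min_order_props(1)[OF assms(1,2,3)]) (use assms(4,5) that in auto)
  have mp2: "M \<le> elem_order B (b i)" if "i \<in> {1..L}" for i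
    unfolding M_def by (rule min_order_props(2)[OF assms(1,2,3)]) (use assms(4,5) that in auto)
  have mp3: "M = \<infinity> \<or> (\<exists>m\<ge>2. M = enat m)"
    unfolding M_def by (rule min_order_props(3)[OF assms(1,2,3)]) (use assms(4,5) in auto)
  have r0: "0 \<le> r" and r2: "r \<le> 1 / 2" and M0: "M \<noteq> enat 0"
    using mp3 unfolding r_def recip_enat_def by auto
  have caA: "a i \<in> carrier A" if "i \<in> {1..L}" for i using assms(4)[OF that] by simp
  have caB: "b i \<in> carrier B" if "i \<in> {1..L}" for i using assms(5)[OF that] by simp
  have loopA: "1 \<le> real k * r" if "x \<in> {1..L}" "k \<ge> 1" "a x [^]\<^bsub>A\<^esub> k = \<one>\<^bsub>A\<^esub>" for x k
    unfolding r_def by (rule loop_weight[OF assms(1) caA[OF that(1)] that(3) that(2) mp1[OF that(1)] M0])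
  have loopB: "1 \<le> real k * r" if "x \<in> {1..L}" "k \<ge> 1" "b x [^]\<^bsub>B\<^esub> k = \<one>\<^bsub>B\<^esub>" for x k
    unfolding r_def by (rule loop_weight[OF assms(2) caB[OF that(1)] that(3) that(2) mp2[OF that(1)] M0])
  have vnn: "v (i, j) \<ge> 0" if "i \<in> {1..L}" "j \<in> {1..L}" for i j
    using assms(6) that unfolding in_V_def by auto
  have cols: "(\<Sum>i=1..L. v (i, j)) = 1" if "j \<in> {1..L}" for j
    using assms(6) that unfolding in_V_def by auto
  have rows: "(\<Sum>j=1..L. v (i, j)) = 1" if "i \<in> {1..L}" for i
    using assms(6) that unfolding in_V_def by auto
  have succ: "(if p = L then 1 else p + 1) \<in> {1..L}" if "p \<in> {1..L}" for p
    using that by auto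
  have Pnn: "P (i, j) \<ge> 0" if "i \<in> {1..L}" "j \<in> {1..L}" for i j
    unfolding P_def phi_def using vnn[OF that(2) succ[OF that(1)]] by simp
  have Prows: "(\<Sum>j=1..L. P (i, j)) = 1" if "i \<in> {1..L}" for i
    unfolding P_def phi_def using cols[OF succ[OF that]] by simp
  define w1 :: "nat \<times> nat \<Rightarrow> real" where "w1 = (\<lambda>(i, j). if i < j then 1 else if i = j then r else 0)"
  define w2 :: "nat \<times> nat \<Rightarrow> real" where "w2 = (\<lambda>(i, j). if i = j then r else 1 / 2)"
  have w1nn: "w1 (i, j) \<ge> 0" for i j using r0 unfolding w1_def by auto
  have w2nn: "w2 (i, j) \<ge> 0" for i j using r0 unfolding w2_def by auto
  have kA1: "kappa A L a v \<le> lin L w1 v"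
  proof (rule kappa_le)
    fix i j show "0 \<le> w1 (i, j)" by (rule w1nn)
  next
    fix i j assume "i \<in> {1..L}" "j \<in> {1..L}" then show "0 \<le> v (i, j)" by (rule vnn)
  next
    fix d assume dd: "d \<in> disk_vectors A L a"
    show "1 \<le> lin L w1 d" unfolding w1_def
      by (rule disk_w1[where G=A and a=a and L=L and r=r]) (auto intro: assms(1) caA r0 loopA dd)
  qed
  have kB1: "kappa B L b P \<le> lin L w1 P"
  proof (rule kappa_le)
    fix i j show "0 \<le> w1 (i, j)" by (rule w1nn)
  next
    fix i j assume "i \<in> {1..L}" "j \<in> {1..L}" then show "0 \<le> P (i, j)" by (rule Pnn)
  next
    fix d assume dd: "d \<in> disk_vectors B L b"
    show "1 \<le> lin L w1 d" unfolding w1_def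
      by (rule disk_w1[where G=B and a=b and L=L and r=r]) (auto intro: assms(2) caB r0 loopB dd)
  qed
  have kA2: "kappa A L a v \<le> lin L w2 v"
  proof (rule kappa_le)
    fix i j show "0 \<le> w2 (i, j)" by (rule w2nn)
  next
    fix i j assume "i \<in> {1..L}" "j \<in> {1..L}" then show "0 \<le> v (i, j)" by (rule vnn)
  next
    fix d assume dd: "d \<in> disk_vectors A L a"
    show "1 \<le> lin L w2 d" unfolding w2_def
      by (rule disk_w2[where G=A and a=a and L=L and r=r]) (auto intro: assms(1) caA r0 loopA dd)
  qed
  have kB2: "kappa B L b P \<le> lin L w2 P"
  proof (rule kappa_le)
    fix i j show "0 \<le> w2 (i, j)" by (rule w2nn)
  next
    fix i j assume "i \<in> {1..L}" "j \<in> {1..L}" then show "0 \<le> P (i, j)" by (rule Pnn)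
  next
    fix d assume dd: "d \<in> disk_vectors B L b"
    show "1 \<le> lin L w2 d" unfolding w2_def
      by (rule disk_w2[where G=B and a=b and L=L and r=r]) (auto intro: assms(2) caB r0 loopB dd)
  qed
  define D where "D = (\<Sum>i=1..L. v (i, i)) + (\<Sum>i=1..L. P (i, i))"
  have e1: "lin L w1 v + lin L w1 P = real L - 1 + r * D"
    using key_identity[OF assms(3) cols] unfolding w1_def lin_w1 D_def P_def
    by (simp add: algebra_simps)
  have l2v: "lin L w2 v = real L / 2 + (r - 1 / 2) * (\<Sum>i=1..L. v (i, i))"
    unfolding w2_def by (rule lin_w2_rows) (rule rows)
  have l2P: "lin L w2 P = real L / 2 + (r - 1 / 2) * (\<Sum>i=1..L. P (i, i))"
    unfolding w2_def by (rule lin_w2_rows) (rule Prows)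
  have e2: "lin L w2 v + lin L w2 P = real L + (r - 1 / 2) * D"
    unfolding l2v l2P D_def by (simp add: algebra_simps)
  have "kappa A L a v + kappa B L b P \<le> real L - 1 + 2 * r"
  proof (cases "D \<le> 2")
    case True
    have "r * D \<le> r * 2" using True r0 by (simp add: mult_left_mono)
    moreover have "r * 2 = 2 * r" by simp
    ultimately show ?thesis using kA1 kB1 e1 by linarith
  next
    case False
    have "(r - 1 / 2) * D \<le> (r - 1 / 2) * 2"
      using False r2 by (intro mult_left_mono_neg) auto
    moreover have "(r - 1 / 2) * 2 = 2 * r - 1" by (simp add: algebra_simps)
    ultimately show ?thesis using kA2 kB2 e2 by linarith
  qed
  then show ?thesis unfolding P_def r_def M_def .
qed

end
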